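(* For any causal encoding policy $\mathbb{P}_E$ and any $K\in\mathbb{N}_{+}$, with $\hat x(k)=\mathbb{E}[x(k)\mid a(0:k)]$, $$\frac1{K\tau}\sum_{k=0}^{K-1}\mathbb{E}[\ell(a(k))]\ \ge\ \frac1\tau\,\theta^{-1}\Big(\frac1K I\big(x(0:K-1);\hat x(0:K-1)\big)\Big).$$ Here $I$ denotes mutual information in bits.
   Context: Standing assumptions: $A\in\mathbb{R}^{n\times n}$ is Hurwitz, $BB^\top\succ0$, and $\Sigma_0\succ0$. Source: $dx_t=Ax_t\,dt+B\,dw_t$, with $x_0\sim\mathcal{N}(0,\Sigma_0)$ and $w$ a standard $n$-dimensional Brownian motion. Fix $\tau>0$ and let $x(k)=x_{k\tau}$. Encoding policies: $\{0,1\}^*$ is the set of finite binary strings, including the empty string $\emptyset$; $\ell(a)$ is the length of $a$, with $\ell(\emptyset)=0$. A causal encoding policy $\mathbb{P}_E$ is a sequence of Borel stochastic kernels $\mathbb{P}[a(k)\mid a(0:k-1),x(0:k)]$, $k\in\mathbb{N}_0$, with $a(k)\in\{0,1\}^*$. The function $\theta$: $\theta:[0,\infty)\to[0,\infty)$ is $\theta(x)=x+(1+x)\log_2(1+x)-x\log_2x$, with $0\log0=0$. It is strictly increasing and concave, with inverse $\theta^{-1}$. *)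

theory Defs
  imports "HOL-Probability.Probability"
begin

definition theta :: "real \<Rightarrow> real" where
  "theta x = x + (1 + x) * log 2 (1 + x) - (if x = 0 then 0 else x * log 2 x)"

definition theta_inv :: "real \<Rightarrow> real" where
  "theta_inv y = (THE x. 0 \<le> x \<and> theta x = y)"

definition theta_inv_ext :: "ennreal \<Rightarrow> ennreal" where
  "theta_inv_ext y = (if y = \<top> then \<top> else ennreal (theta_inv (enn2real y)))"

definition mutual_info_bits ::
  "'a measure \<Rightarrow> 'b measure \<Rightarrow> 'c measure \<Rightarrow> ('a \<Rightarrow> 'b) \<Rightarrow> ('a \<Rightarrow> 'c) \<Rightarrow> ennreal" where
  "mutual_info_bits M S T X Y =
     (let P = distr M S X \<Otimes>\<^sub>M distr M T Y;
          Q = distr M (S \<Otimes>\<^sub>M T) (\<lambda>\<omega>. (X \<omega>, Y \<omega>))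
      in if absolutely_continuous P Q \<and> integrable Q (entropy_density 2 P Q)
         then ennreal (prob_space.mutual_information M 2 S T X Y) else \<top>)"

definition indep_rv :: "'a measure \<Rightarrow> 'b measure \<Rightarrow> ('a \<Rightarrow> 'b) \<Rightarrow> 'c measure \<Rightarrow> ('a \<Rightarrow> 'c) \<Rightarrow> bool" where
  "indep_rv M S X T Y \<longleftrightarrow> X \<in> measurable M S \<and> Y \<in> measurable M T \<and>
     distr M (S \<Otimes>\<^sub>M T) (\<lambda>\<omega>. (X \<omega>, Y \<omega>)) = distr M S X \<Otimes>\<^sub>M distr M T Y"

definition pos_def_mat :: "real^'n^'n \<Rightarrow> bool" where
  "pos_def_mat S \<longleftrightarrow> (\<forall>v. v \<noteq> 0 \<longrightarrow> v \<bullet> (S *v v) > 0)"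

definition hurwitz :: "real^'n^'n \<Rightarrow> bool" where
  "hurwitz A \<longleftrightarrow> (\<forall>(lam::complex) (v::complex^'n). v \<noteq> 0 \<and>
      (\<chi> i. \<Sum>j\<in>UNIV. complex_of_real (A$i$j) * v$j) = (\<chi> i. lam * v$i) \<longrightarrow> Re lam < 0)"

(* Y ~ N(0, S) (S positive definite): every nonzero linear functional is centred normal *)
definition gaussian_vec :: "'a measure \<Rightarrow> ('a \<Rightarrow> real^'n) \<Rightarrow> real^'n^'n \<Rightarrow> bool" where
  "gaussian_vec M Y S \<longleftrightarrow> Y \<in> borel_measurable M \<and>
     (\<forall>v. v \<noteq> 0 \<longrightarrow> distributed M lborel (\<lambda>\<omega>. v \<bullet> Y \<omega>)
                          (\<lambda>r. ennreal (normal_density 0 (sqrt (v \<bullet> (S *v v))) r)))"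

definition std_brownian :: "'a measure \<Rightarrow> (real \<Rightarrow> 'a \<Rightarrow> real^'n) \<Rightarrow> bool" where
  "std_brownian M w \<longleftrightarrow>
     (\<forall>t. w t \<in> borel_measurable M) \<and>
     (AE \<omega> in M. w 0 \<omega> = 0 \<and> continuous_on {0..} (\<lambda>t. w t \<omega>)) \<and>
     (\<forall>s t. 0 \<le> s \<and> s < t \<longrightarrow> gaussian_vec M (\<lambda>\<omega>. w t \<omega> - w s \<omega>) ((t - s) *\<^sub>R mat 1)) \<and>
     (\<forall>(ts::nat \<Rightarrow> real) m. 0 \<le> ts 0 \<and> strict_mono ts \<longrightarrow>
        prob_space.indep_vars M (\<lambda>_. borel) (\<lambda>i \<omega>. w (ts (Suc i)) \<omega> - w (ts i) \<omega>) {..<m})"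

(* X solves dX = A X dt + B dw (pathwise integral form, B constant), X_0 ~ N(0,\<Sigma>0)
   independent of w *)
definition lti_source ::
  "'a measure \<Rightarrow> real^'n^'n \<Rightarrow> real^'n^'n \<Rightarrow> real^'n^'n \<Rightarrow> (real \<Rightarrow> 'a \<Rightarrow> real^'n)
     \<Rightarrow> (real \<Rightarrow> 'a \<Rightarrow> real^'n) \<Rightarrow> bool" where
  "lti_source M A B Sigma0 w X \<longleftrightarrow>
     std_brownian M w \<and>
     gaussian_vec M (X 0) Sigma0 \<and>
     indep_rv M borel (X 0) (Pi\<^sub>M UNIV (\<lambda>_::real. borel)) (\<lambda>\<omega> t. w t \<omega>) \<and>
     (\<forall>t. X t \<in> borel_measurable M) \<and>
     (AE \<omega> in M. continuous_on {0..} (\<lambda>t. X t \<omega>) \<and>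
        (\<forall>t\<ge>0. X t \<omega> = X 0 \<omega> + integral {0..t} (\<lambda>s. A *v X s \<omega>) + B *v w t \<omega>))"

(* causal (randomised) encoding policy: a(k) is drawn from a Borel kernel given
   (a(0:k-1), x(0:k)), realised with fresh independent randomness u(k) *)
definition causal_encoding ::
  "'a measure \<Rightarrow> real \<Rightarrow> (real \<Rightarrow> 'a \<Rightarrow> real^'n) \<Rightarrow> (nat \<Rightarrow> 'a \<Rightarrow> bool list) \<Rightarrow> bool" where
  "causal_encoding M tau X a \<longleftrightarrow>
     (\<forall>k. a k \<in> measurable M (count_space UNIV)) \<and>
     (\<exists>(u :: nat \<Rightarrow> 'a \<Rightarrow> real)
        (enc :: nat \<Rightarrow> bool list list \<times> (nat \<Rightarrow> real^'n) \<times> real \<Rightarrow> bool list).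
        (\<forall>k. u k \<in> borel_measurable M) \<and>
        prob_space.indep_vars M (\<lambda>_. borel) u UNIV \<and>
        indep_rv M (Pi\<^sub>M UNIV (\<lambda>_::nat. borel)) (\<lambda>\<omega> k. u k \<omega>)
                  (Pi\<^sub>M UNIV (\<lambda>_::real. borel)) (\<lambda>\<omega> t. X t \<omega>) \<and>
        (\<forall>k. enc k \<in> measurable (count_space UNIV \<Otimes>\<^sub>M (Pi\<^sub>M {..k} (\<lambda>_. borel) \<Otimes>\<^sub>M borel))
                                  (count_space UNIV)) \<and>
        (AE \<omega> in M. \<forall>k. a k \<omega> =
           enc k (map (\<lambda>i. a i \<omega>) [0..<k], (\<lambda>i\<in>{..k}. X (real i * tau) \<omega>), u k \<omega>)))"

definition xhat ::
  "'a measure \<Rightarrow> real \<Rightarrow> (real \<Rightarrow> 'a \<Rightarrow> real^'n) \<Rightarrow> (nat \<Rightarrow> 'a \<Rightarrow> bool list) \<Rightarrow> nat \<Rightarrow> 'a \<Rightarrow> real^'n" where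
  "xhat M tau X a k \<omega> =
     (\<chi> i. real_cond_exp M
             (vimage_algebra (space M) (\<lambda>\<omega>'. map (\<lambda>j. a j \<omega>') [0..<Suc k]) (count_space UNIV))
             (\<lambda>\<omega>'. X (real k * tau) \<omega>' $ i) \<omega>)"

end

theory Submission
  imports Defs "HOL-Real_Asymp.Real_Asymp"
begin

lemma vec_meas: "(\<lambda>x. \<chi> i. (f i x::real)) \<in> borel_measurable M" if "\<And>i. f i \<in> borel_measurable M" for f :: "'n::finite \<Rightarrow> 'a \<Rightarrow> real"
  using that by (auto simp: borel_measurable_euclidean_space[where 'c="real^'n"] Basis_vec_def inner_axis)

lemma theta_pos_part: "0 \<le> x \<Longrightarrow> x * log 2 x \<le> (1 + x) * log 2 (1 + x)"
proof -
  assume x: "0 \<le> x"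
  show ?thesis
  proof (cases "x = 0")
    case True then show ?thesis by simp
  next
    case False
    then have "log 2 x \<le> log 2 (1+x)" using x by simp
    moreover have "0 \<le> log 2 (1+x)" using x by simp
    ultimately have "x * log 2 x \<le> x * log 2 (1+x)" using x by (simp add: mult_left_mono)
    also have "\<dots> \<le> (1+x) * log 2 (1+x)" using \<open>0 \<le> log 2 (1+x)\<close> by (simp add: mult_right_mono)
    finally show ?thesis .
  qed
qed

lemma theta_ge: "0 \<le> x \<Longrightarrow> x \<le> theta x"
  using theta_pos_part[of x] by (auto simp: theta_def)

lemma theta_0: "theta 0 = 0" by (simp add: theta_def)

lemma theta_deriv: "0 < x \<Longrightarrow> (theta has_real_derivative (1 + (ln (1+x) - ln x) / ln 2)) (at x)"
proof -
  assume x: "0 < x"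
  have D: "((\<lambda>y. y + (1 + y) * (ln (1 + y) / ln 2) - y * (ln y / ln 2)) has_real_derivative
     (1 + ((1 * (ln (1+x) / ln 2)) + (1+x) * (inverse (1+x) / ln 2)) - (1 * (ln x / ln 2) + x * (inverse x / ln 2)))) (at x)"
    using x by (intro derivative_eq_intros) auto
  have E: "(1 + ((1 * (ln (1+x) / ln 2)) + (1+x) * (inverse (1+x) / ln 2)) - (1 * (ln x / ln 2) + x * (inverse x / ln 2)))
     = 1 + (ln (1+x) - ln x) / ln 2"
  proof -
    have a: "(1+x) * (inverse (1+x) / ln 2) = 1 / ln (2::real)" using x by (simp add: divide_simps)
    have b: "x * (inverse x / ln 2) = 1 / ln (2::real)" using x by (simp add: divide_simps)
    show ?thesis unfolding a b by (simp add: diff_divide_distrib)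
  qed
  show ?thesis
  proof (rule has_field_derivative_transform_within_open[OF D[unfolded E] open_greaterThan[of 0]])
    show "x \<in> {0<..}" using x by simp
  next
    fix y :: real assume "y \<in> {0<..}"
    then show "y + (1 + y) * (ln (1 + y) / ln 2) - y * (ln y / ln 2) = theta y"
      by (simp add: theta_def log_def)
  qed
qed

lemma theta_strict: assumes "0 \<le> a" "a < b" shows "theta a < theta b"
proof (cases "a = 0")
  case True
  then show ?thesis using theta_ge[of b] assms by (simp add: theta_0)
next
  case False
  then have a: "0 < a" using assms by simp
  show ?thesis
  proof (rule DERIV_pos_imp_increasing[OF assms(2)])
    fix y assume y: "a \<le> y" "y \<le> b"
    then have "0 < y" using a by simp
    moreover have "ln y < ln (1+y)" using \<open>0<y\<close> by simp
    ultimately have "0 < (ln (1+y) - ln y) / ln 2" by (simp add: divide_pos_pos)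
    then show "\<exists>d. (theta has_real_derivative d) (at y) \<and> 0 < d"
      using theta_deriv[OF \<open>0<y\<close>] by (intro exI[of _ "1 + (ln (1+y) - ln y) / ln 2"]) auto
  qed
qed

lemma theta_cont: "continuous_on {0..} theta"
proof -
  have c1: "continuous_on {0..} (\<lambda>x::real. x + (1 + x) * log 2 (1 + x))"
    by (intro continuous_intros) auto
  have h0: "((\<lambda>x::real. x * ln x) \<longlongrightarrow> 0) (at_right 0)" by real_asymp
  have c2: "continuous_on {0..} (\<lambda>x::real. if x = 0 then 0 else x * log 2 x)"
  proof (clarsimp simp: continuous_on_eq_continuous_within)
    fix x :: real assume x: "0 \<le> x"
    show "continuous (at x within {0..}) (\<lambda>x. if x = 0 then 0 else x * log 2 x)"
    proof (cases "x = 0")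
      case True
      have "((\<lambda>x::real. (x * ln x) / ln 2) \<longlongrightarrow> 0 / ln 2) (at_right 0)"
        by (intro tendsto_divide h0) auto
      then have "((\<lambda>x::real. (x * ln x) / ln 2) \<longlongrightarrow> 0) (at_right 0)" by simp
      moreover have "eventually (\<lambda>x::real. x * ln x / ln 2 = (if x = 0 then 0 else x * log 2 x)) (at_right 0)"
        using eventually_at_right_less[of "0::real"] by (auto elim!: eventually_mono simp: log_def)
      ultimately have "((\<lambda>x::real. if x = 0 then 0 else x * log 2 x) \<longlongrightarrow> 0) (at_right 0)"
        by (rule Lim_transform_eventually)
      then have "((\<lambda>x::real. if x = 0 then 0 else x * log 2 x) \<longlongrightarrow> 0) (at 0 within {0..})"
        by (simp add: at_within_Ici_at_right)
      then show ?thesis using True by (simp add: continuous_within)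
    next
      case False
      then have "0 < x" using x by simp
      have "continuous (at x) (\<lambda>x. x * log 2 x)" using \<open>0<x\<close> by (intro continuous_intros) auto
      moreover have "\<forall>\<^sub>F y in nhds x. y * log 2 y = (if y = 0 then 0 else y * log 2 y)"
        using eventually_nhds_in_open[of "{0<..}" x] \<open>0<x\<close> by (auto elim!: eventually_mono)
      ultimately have "continuous (at x) (\<lambda>x. if x = 0 then 0 else x * log 2 x)"
        using isCont_cong[of "\<lambda>y. y * log 2 y" "\<lambda>y. if y = 0 then 0 else y * log 2 y" x] by simp
      then show ?thesis by (rule continuous_at_imp_continuous_within)
    qed
  qed
  show ?thesis unfolding theta_def[abs_def]
    by (intro continuous_on_diff c1 c2)
qed


lemma theta_inj: "0 \<le> s \<Longrightarrow> 0 \<le> t \<Longrightarrow> theta s = theta t \<Longrightarrow> s = t"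
  by (metis linorder_neqE_linordered_idom order_less_irrefl theta_strict)

lemma theta_inv_le:
  assumes y: "0 \<le> y" and x: "0 \<le> x" and yx: "y \<le> theta x"
  shows "theta_inv y \<le> x"
proof -
  have "theta 0 \<le> y" using y by (simp add: theta_0)
  moreover have "continuous_on {0..x} theta"
    using theta_cont by (rule continuous_on_subset) auto
  ultimately obtain t where t: "0 \<le> t" "t \<le> x" "theta t = y"
    using IVT'[of theta 0 y x] yx x by auto
  have "theta_inv y = t"
    unfolding theta_inv_def
    by (rule the_equality) (use t theta_inj in auto)
  then show ?thesis using t by simp
qed

lemma nn_integral_split_fibers:
  fixes Z :: "'a \<Rightarrow> 'z::countable"
  assumes Z[measurable]: "Z \<in> measurable M (count_space UNIV)" and f[measurable]: "f \<in> borel_measurable M"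
  shows "(\<integral>\<^sup>+\<omega>. f \<omega> \<partial>M) = (\<integral>\<^sup>+z. (\<integral>\<^sup>+\<omega>. f \<omega> * indicator (Z -` {z} \<inter> space M) \<omega> \<partial>M) \<partial>count_space UNIV)"
proof -
  have "(\<integral>\<^sup>+\<omega>. f \<omega> \<partial>M) = (\<integral>\<^sup>+\<omega>. (\<integral>\<^sup>+z. f \<omega> * indicator (Z -` {z} \<inter> space M) \<omega> \<partial>count_space UNIV) \<partial>M)"
  proof (rule nn_integral_cong)
    fix \<omega> assume \<omega>: "\<omega> \<in> space M"
    have "(\<integral>\<^sup>+z. f \<omega> * indicator (Z -` {z} \<inter> space M) \<omega> \<partial>count_space UNIV)
        = (\<integral>\<^sup>+z. f \<omega> * indicator {Z \<omega>} z \<partial>count_space UNIV)"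
      using \<omega> by (intro nn_integral_cong) (auto split: split_indicator)
    also have "\<dots> = f \<omega>"
      by (subst nn_integral_cmult_indicator) auto
    finally show "f \<omega> = (\<integral>\<^sup>+z. f \<omega> * indicator (Z -` {z} \<inter> space M) \<omega> \<partial>count_space UNIV)" by simp
  qed
  also have "\<dots> = (\<integral>\<^sup>+z. (\<integral>\<^sup>+\<omega>. f \<omega> * indicator (Z -` {z} \<inter> space M) \<omega> \<partial>M) \<partial>count_space UNIV)"
  proof (rule nn_integral_count_space_nn_integral)
    show "countable (UNIV :: 'z set)" by simp
    fix z :: 'z
    have "Z -` {z} \<inter> space M \<in> sets M" by (rule measurable_sets[OF Z]) auto
    then show "(\<lambda>\<omega>. f \<omega> * indicator (Z -` {z} \<inter> space M) \<omega>) \<in> borel_measurable M" by measurable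
  qed
  finally show ?thesis .
qed

lemma AE_fiber_pos:
  assumes M: "prob_space M" and C: "countable C" and YC: "\<And>\<omega>. \<omega> \<in> space M \<Longrightarrow> Y \<omega> \<in> C"
    and fib: "\<And>y. y \<in> C \<Longrightarrow> Y -` {y} \<inter> space M \<in> sets M"
  shows "AE \<omega> in M. 0 < measure M (Y -` {Y \<omega>} \<inter> space M)"
proof (rule AE_I')
  interpret prob_space M by fact
  let ?C = "{y\<in>C. measure M (Y -` {y} \<inter> space M) = 0}"
  show "(\<Union>y\<in>?C. Y -` {y} \<inter> space M) \<in> null_sets M"
  proof (rule null_sets_UN')
    show "countable ?C" using C by (rule countable_subset[rotated]) auto
    fix y assume "y \<in> ?C"
    then show "Y -` {y} \<inter> space M \<in> null_sets M"
      using fib by (auto simp: null_sets_def emeasure_eq_measure)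
  qed
  show "{\<omega> \<in> space M. \<not> 0 < measure M (Y -` {Y \<omega>} \<inter> space M)} \<subseteq> (\<Union>y\<in>?C. Y -` {y} \<inter> space M)"
    using YC by (auto simp: not_less intro!: antisym measure_nonneg)
qed

lemma gibbs_pointwise:
  fixes p r :: real
  assumes p: "0 < p" "p \<le> 1" and r: "0 < r" "r \<le> 1"
  shows "ennreal (- log 2 p) + ennreal (1 / ln 2) \<le> ennreal (- log 2 r) + ennreal (1 / ln 2) * ennreal (r / p)"
proof -
  have l2: "0 < ln (2::real)" by simp
  have "ln (r / p) \<le> r / p - 1" using p r by (intro ln_le_minus_one) auto
  then have "ln r - ln p + 1 \<le> r / p" using p r by (simp add: ln_div)
  then have "(ln r - ln p + 1) / ln 2 \<le> (r / p) / ln 2" using l2 by (intro divide_right_mono) auto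
  then have *: "- log 2 p + 1 / ln 2 \<le> - log 2 r + 1 / ln 2 * (r / p)"
  proof -
    have e1: "- log 2 p + 1 / ln 2 = (ln r - ln p + 1) / ln 2 + (- log 2 r)"
      by (simp add: log_def diff_divide_distrib add_divide_distrib)
    have e2: "1 / ln 2 * (r / p) = (r / p) / ln (2::real)" by simp
    show ?thesis unfolding e1 e2 using \<open>(ln r - ln p + 1) / ln 2 \<le> (r / p) / ln 2\<close> by linarith
  qed
  have a: "0 \<le> - log 2 p" using p by simp
  have b: "0 \<le> - log 2 r" using r by simp
  have "ennreal (- log 2 p) + ennreal (1 / ln 2) = ennreal (- log 2 p + 1 / ln 2)"
    by (rule ennreal_plus[symmetric]) (use a l2 in auto)
  also have "\<dots> \<le> ennreal (- log 2 r + 1 / ln 2 * (r / p))" using * by (rule ennreal_leI)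
  also have "\<dots> = ennreal (- log 2 r) + ennreal (1 / ln 2) * ennreal (r / p)"
  proof -
    have "ennreal (1 / ln 2 * (r / p)) = ennreal (1 / ln 2) * ennreal (r / p)"
      by (rule ennreal_mult) (use l2 p r in auto)
    then show ?thesis by (subst ennreal_plus) (use b l2 p r in auto)
  qed
  finally show ?thesis .
qed


lemma gibbs:
  fixes Z :: "'a \<Rightarrow> 'z::countable" and r :: "'z pmf"
  assumes M: "prob_space M" and Z[measurable]: "Z \<in> measurable M (count_space UNIV)"
    and rpos: "AE \<omega> in M. 0 < pmf r (Z \<omega>)"
  shows "(\<integral>\<^sup>+\<omega>. ennreal (- log 2 (measure M (Z -` {Z \<omega>} \<inter> space M))) \<partial>M)
          \<le> (\<integral>\<^sup>+\<omega>. ennreal (- log 2 (pmf r (Z \<omega>))) \<partial>M)"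
proof -
  interpret prob_space M by fact
  define pz where "pz z = measure M (Z -` {z} \<inter> space M)" for z
  have fibs: "Z -` {z} \<inter> space M \<in> sets M" for z by (rule measurable_sets[OF Z]) auto
  have mp[measurable]: "(\<lambda>\<omega>. pz (Z \<omega>)) \<in> borel_measurable M"
    by (rule measurable_compose[OF Z]) simp
  have mr[measurable]: "(\<lambda>\<omega>. pmf r (Z \<omega>)) \<in> borel_measurable M"
    by (rule measurable_compose[OF Z]) simp
  have AEp: "AE \<omega> in M. 0 < pz (Z \<omega>)"
    unfolding pz_def by (rule AE_fiber_pos[OF M, of UNIV]) (auto intro: fibs)
  have fin: "(\<integral>\<^sup>+\<omega>. ennreal (pmf r (Z \<omega>) / pz (Z \<omega>)) \<partial>M) \<le> 1"
  proof -
    have "(\<integral>\<^sup>+\<omega>. ennreal (pmf r (Z \<omega>) / pz (Z \<omega>)) \<partial>M) = (\<integral>\<^sup>+z. (\<integral>\<^sup>+\<omega>. ennreal (pmf r (Z \<omega>) / pz (Z \<omega>)) * indicator (Z -` {z} \<inter> space M) \<omega> \<partial>M) \<partial>count_space UNIV)"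
      by (rule nn_integral_split_fibers) auto
    also have "\<dots> \<le> (\<integral>\<^sup>+z. ennreal (pmf r z) \<partial>count_space UNIV)"
    proof (rule nn_integral_mono)
      fix z
      have "(\<integral>\<^sup>+\<omega>. ennreal (pmf r (Z \<omega>) / pz (Z \<omega>)) * indicator (Z -` {z} \<inter> space M) \<omega> \<partial>M)
          = (\<integral>\<^sup>+\<omega>. ennreal (pmf r z / pz z) * indicator (Z -` {z} \<inter> space M) \<omega> \<partial>M)"
        by (intro nn_integral_cong) (auto split: split_indicator)
      also have "\<dots> = ennreal (pmf r z / pz z) * emeasure M (Z -` {z} \<inter> space M)"
        by (rule nn_integral_cmult_indicator) (rule fibs)
      also have "\<dots> = ennreal (pmf r z / pz z * pz z)"
        unfolding pz_def emeasure_eq_measure by (rule ennreal_mult[symmetric]) auto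
      also have "\<dots> \<le> ennreal (pmf r z)"
        by (cases "pz z = 0") auto
      finally show "(\<integral>\<^sup>+\<omega>. ennreal (pmf r (Z \<omega>) / pz (Z \<omega>)) * indicator (Z -` {z} \<inter> space M) \<omega> \<partial>M) \<le> ennreal (pmf r z)" .
    qed
    also have "\<dots> = 1" using nn_integral_pmf[of UNIV r] by (simp add: measure_pmf.emeasure_space_1[simplified])
    finally show ?thesis .
  qed
  have "(\<integral>\<^sup>+\<omega>. ennreal (- log 2 (pz (Z \<omega>))) \<partial>M) + ennreal (1/ln 2)
      = (\<integral>\<^sup>+\<omega>. ennreal (- log 2 (pz (Z \<omega>))) + ennreal (1/ln 2) \<partial>M)"
    by (subst nn_integral_add) (auto simp: emeasure_space_1)
  also have "\<dots> \<le> (\<integral>\<^sup>+\<omega>. ennreal (- log 2 (pmf r (Z \<omega>))) + ennreal (1/ln 2) * ennreal (pmf r (Z \<omega>) / pz (Z \<omega>)) \<partial>M)"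
  proof (rule nn_integral_mono_AE)
    show "AE \<omega> in M. ennreal (- log 2 (pz (Z \<omega>))) + ennreal (1/ln 2)
       \<le> ennreal (- log 2 (pmf r (Z \<omega>))) + ennreal (1/ln 2) * ennreal (pmf r (Z \<omega>) / pz (Z \<omega>))"
      using AEp rpos
    proof eventually_elim
      case (elim \<omega>)
      show ?case
        by (rule gibbs_pointwise) (use elim in \<open>auto simp: pz_def pmf_le_1\<close>)
    qed
  qed
  also have "\<dots> = (\<integral>\<^sup>+\<omega>. ennreal (- log 2 (pmf r (Z \<omega>)))\<partial>M) + ennreal (1/ln 2) * (\<integral>\<^sup>+\<omega>. ennreal (pmf r (Z \<omega>) / pz (Z \<omega>)) \<partial>M)"
    by (simp add: nn_integral_add nn_integral_cmult)
  also have "\<dots> \<le> (\<integral>\<^sup>+\<omega>. ennreal (- log 2 (pmf r (Z \<omega>)))\<partial>M) + ennreal (1/ln 2)"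
    using mult_left_mono[OF fin, of "ennreal (1/ln 2)"] by (intro add_left_mono) simp
  finally have "ennreal (1/ln 2) + (\<integral>\<^sup>+\<omega>. ennreal (- log 2 (pz (Z \<omega>))) \<partial>M)
      \<le> ennreal (1/ln 2) + (\<integral>\<^sup>+\<omega>. ennreal (- log 2 (pmf r (Z \<omega>)))\<partial>M)"
    by (simp add: add.commute)
  then show ?thesis unfolding pz_def by (simp add: ennreal_add_left_cancel_le)
qed

definition r0 :: "real \<Rightarrow> bool list pmf" where
  "r0 x = bind_pmf (geometric_pmf (1 / (1 + x))) (\<lambda>l. pmf_of_set {xs. length xs = l})"

lemma lists_len_fin: "finite {xs :: bool list. length xs = l}"
  using finite_lists_length_eq[of "UNIV :: bool set" l] by simp

lemma lists_len_card: "card {xs :: bool list. length xs = l} = 2 ^ l"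
  using card_lists_length_eq[of "UNIV :: bool set" l] by simp

lemma lists_len_ne: "{xs :: bool list. length xs = l} \<noteq> {}"
  by (auto intro!: exI[of _ "replicate l True"])

lemma pmf_r0:
  assumes x: "0 < x"
  shows "pmf (r0 x) s = (1 / (1 + x)) * (x / (1 + x)) ^ length s / 2 ^ length s"
proof -
  have p: "0 < 1 / (1 + x)" "1 / (1 + x) \<le> 1" using x by auto
  have "pmf (r0 x) s = (\<integral>l. pmf (pmf_of_set {xs :: bool list. length xs = l}) s \<partial>measure_pmf (geometric_pmf (1 / (1 + x))))"
    unfolding r0_def by (rule pmf_bind)
  also have "\<dots> = (\<integral>l. (1 / 2 ^ length s) * indicator {length s} l \<partial>measure_pmf (geometric_pmf (1 / (1 + x))))"
    by (intro Bochner_Integration.integral_cong refl)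
       (auto simp: pmf_of_set[OF lists_len_ne lists_len_fin] lists_len_card split: split_indicator)
  also have "\<dots> = (1 / 2 ^ length s) * pmf (geometric_pmf (1 / (1 + x))) (length s)"
    by (simp add: measure_pmf_single)
  also have "\<dots> = (1 / (1 + x)) * (x / (1 + x)) ^ length s / 2 ^ length s"
  proof -
    have "1 - 1 / (1 + x) = x / (1 + x)" using x by (simp add: field_simps)
    then show ?thesis using p by simp
  qed
  finally show ?thesis .
qed

lemma pmf_r0_pos: "0 < x \<Longrightarrow> 0 < pmf (r0 x) s"
  by (simp add: pmf_r0)

lemma log_pmf_r0:
  assumes x: "0 < x"
  shows "- log 2 (pmf (r0 x) s) = log 2 (1 + x) + real (length s) * (1 + log 2 ((1 + x) / x))"
proof -
  have "- log 2 (pmf (r0 x) s) = - (log 2 (1 / (1 + x)) + real (length s) * log 2 (x / (1 + x)) - real (length s) * log 2 2)"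
    using x by (simp add: pmf_r0 log_mult log_divide log_nat_power)
  also have "\<dots> = log 2 (1 + x) + real (length s) * (1 + log 2 ((1 + x) / x))"
    using x by (simp add: log_divide algebra_simps)
  finally show ?thesis .
qed

fun rK :: "real \<Rightarrow> nat \<Rightarrow> bool list list pmf" where
  "rK x 0 = return_pmf []"
| "rK x (Suc n) = map_pmf (\<lambda>(s, zs). s # zs) (pair_pmf (r0 x) (rK x n))"

lemma pmf_rK: "length z = n \<Longrightarrow> pmf (rK x n) z = prod_list (map (pmf (r0 x)) z)"
proof (induction n arbitrary: z)
  case 0 then show ?case by simp
next
  case (Suc n)
  then obtain s zs where z: "z = s # zs" "length zs = n" by (cases z) auto
  have inj: "inj (\<lambda>(s :: bool list, zs :: bool list list). s # zs)" by (auto simp: inj_def)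
  have "pmf (rK x (Suc n)) z = pmf (pair_pmf (r0 x) (rK x n)) (s, zs)"
    unfolding z rK.simps using pmf_map_inj'[OF inj, of _ "(s, zs)"] by simp
  then show ?case using Suc.IH[OF z(2)] z by (simp add: pmf_pair)
qed

lemma prod_list_map_upt: "prod_list (map f [0..<n]) = (\<Prod>j<n. f j)"
  by (induction n) auto

lemma sum_list_map_upt: "sum_list (map f [0..<n]) = (\<Sum>j<n. f j)"
  by (induction n) auto

lemma entbound: "t * ennreal (max 0 (- log 2 (enn2real t))) \<le> ennreal (1 / ln 2)"
proof (cases t)
  case top then show ?thesis by (simp add: log_def)
next
  case (real s)
  show ?thesis
  proof (cases "0 < s \<and> s < 1")
    case True
    have "ln (1 / s) \<le> 1 / s - 1" using True by (intro ln_le_minus_one) auto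
    then have "- ln s \<le> 1 / s - 1" using True by (simp add: ln_div)
    then have "s * (- ln s) \<le> s * (1 / s - 1)" using True by (intro mult_left_mono) auto
    also have "\<dots> \<le> 1" using True by (simp add: field_simps)
    finally have a: "s * (- ln s) \<le> 1" .
    have "s * max 0 (- log 2 s) = (s * (- ln s)) / ln 2"
    proof -
      have "ln s < 0" using True by simp
      then have "ln s / ln 2 \<le> 0" by (simp add: divide_nonpos_pos)
      then show ?thesis using True by (simp add: log_def max_def)
    qed
    also have "\<dots> \<le> 1 / ln 2" using a by (intro divide_right_mono) auto
    finally have b: "s * max 0 (- log 2 s) \<le> 1 / ln 2" .
    have "t * ennreal (max 0 (- log 2 (enn2real t))) = ennreal (s * max 0 (- log 2 s))"
      using real by (simp add: ennreal_mult)
    also have "\<dots> \<le> ennreal (1 / ln 2)" using b by (rule ennreal_leI)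
    finally show ?thesis .
  next
    case False
    then have "s = 0 \<or> 1 \<le> s" using real by auto
    moreover have "1 \<le> s \<Longrightarrow> - log 2 s \<le> 0" by simp
    ultimately have "t * ennreal (max 0 (- log 2 (enn2real t))) = 0"
      using real by (auto simp: max_def)
    then show ?thesis by (simp only:) (rule zero_le)
  qed
qed

lemma map_upt_eq: "(map f [0..<K] = z) \<longleftrightarrow> (length z = K \<and> (\<forall>j<K. f j = z ! j))"
  by (auto simp: list_eq_iff_nth_eq)

lemma meas_Z:
  fixes a :: "nat \<Rightarrow> 'a \<Rightarrow> bool list"
  assumes ma[measurable]: "\<And>k. a k \<in> measurable M (count_space UNIV)"
  shows "(\<lambda>\<omega>. map (\<lambda>j. a j \<omega>) [0..<K]) \<in> measurable M (count_space UNIV)"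
proof (rule measurable_count_space_eq_countable[THEN iffD2])
  show "countable (UNIV :: bool list list set)" by simp
  have "(\<lambda>\<omega>. map (\<lambda>j. a j \<omega>) [0..<K]) -` {z} \<inter> space M \<in> sets M" for z :: "bool list list"
  proof -
    have "(\<lambda>\<omega>. map (\<lambda>j. a j \<omega>) [0..<K]) -` {z} \<inter> space M = {\<omega>\<in>space M. length z = K \<and> (\<forall>j<K. a j \<omega> = z ! j)}"
      by (auto simp: map_upt_eq)
    also have "\<dots> = (if length z = K then (\<Inter>j\<in>{..<K}. a j -` {z ! j} \<inter> space M) \<inter> space M else {})"
      by (cases "K = 0") auto
    also have "\<dots> \<in> sets M"
    proof (cases "length z = K")
      case True
      have "\<And>j. a j -` {z ! j} \<inter> space M \<in> sets M" by (rule measurable_sets[OF ma]) simp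
      then have "(\<Inter>j\<in>{..<K}. a j -` {z ! j} \<inter> space M) \<inter> space M \<in> sets M"
      proof (cases "K = 0")
        case False
        then have "(\<Inter>j\<in>{..<K}. a j -` {z ! j} \<inter> space M) \<in> sets M"
          using \<open>\<And>j. a j -` {z ! j} \<inter> space M \<in> sets M\<close> by (intro sets.finite_INT) auto
        then show ?thesis by (intro sets.Int sets.top)
      qed simp
      then show ?thesis using True by simp
    qed simp
    finally show ?thesis .
  qed
  then show "(\<lambda>\<omega>. map (\<lambda>j. a j \<omega>) [0..<K]) \<in> space M \<rightarrow> UNIV \<and> (\<forall>z\<in>UNIV. (\<lambda>\<omega>. map (\<lambda>j. a j \<omega>) [0..<K]) -` {z} \<inter> space M \<in> sets M)"
    by simp
qed
lemma singleton_PiM: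
  assumes "finite I" "y \<in> space (Pi\<^sub>M I (\<lambda>_. borel :: ('b::t1_space) measure))"
  shows "{y} \<in> sets (Pi\<^sub>M I (\<lambda>_. borel :: 'b measure))"
proof -
  have "y \<in> extensional I" using assms(2) by (simp add: space_PiM PiE_def)
  then have "{y} = PiE I (\<lambda>i. {y i})" by (simp add: PiE_singleton)
  also have "\<dots> \<in> sets (Pi\<^sub>M I (\<lambda>_. borel :: 'b measure))"
    using assms(1) by (intro sets_PiM_I_finite) (simp_all add: borel_closed)
  finally show ?thesis .
qed


theorem lemma3:
  fixes M :: "'a measure"
    and A B Sigma0 :: "real^'n^'n"
    and w X :: "real \<Rightarrow> 'a \<Rightarrow> real^'n"
    and tau :: real
    and a :: "nat \<Rightarrow> 'a \<Rightarrow> bool list"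
    and K :: nat
  assumes "prob_space M"
    and "hurwitz A"
    and "pos_def_mat (B ** transpose B)"
    and "transpose Sigma0 = Sigma0" and "pos_def_mat Sigma0"
    and "lti_source M A B Sigma0 w X"
    and "tau > 0"
    and "causal_encoding M tau X a"
    and "K \<ge> 1"
  shows "(\<Sum>k<K. \<integral>\<^sup>+ \<omega>. ennreal (real (length (a k \<omega>))) \<partial>M) / ennreal (real K * tau)
       \<ge> theta_inv_ext
            (mutual_info_bits M (Pi\<^sub>M {..<K} (\<lambda>_. borel)) (Pi\<^sub>M {..<K} (\<lambda>_. borel))
               (\<lambda>\<omega>. \<lambda>k\<in>{..<K}. X (real k * tau) \<omega>)
               (\<lambda>\<omega>. \<lambda>k\<in>{..<K}. xhat M tau X a k \<omega>) / of_nat K) / ennreal tau"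
proof -
  interpret prob_space M by fact
  have mXt[measurable]: "X t \<in> borel_measurable M" for t
    using assms(6) unfolding lti_source_def by auto
  have ma[measurable]: "a k \<in> measurable M (count_space UNIV)" for k
    using assms(8) unfolding causal_encoding_def by auto
  define S :: "(nat \<Rightarrow> real^'n) measure" where "S = Pi\<^sub>M {..<K} (\<lambda>_. borel)"
  define Xv where "Xv = (\<lambda>\<omega>. \<lambda>k\<in>{..<K}. X (real k * tau) \<omega>)"
  define Yv where "Yv = (\<lambda>\<omega>. \<lambda>k\<in>{..<K}. xhat M tau X a k \<omega>)"
  define Z where "Z = (\<lambda>\<omega>. map (\<lambda>j. a j \<omega>) [0..<K])"
  define L where "L = (\<Sum>k<K. \<integral>\<^sup>+\<omega>. ennreal (real (length (a k \<omega>))) \<partial>M)"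
  have mxhat[measurable]: "xhat M tau X a k \<in> borel_measurable M" for k
    unfolding xhat_def[abs_def] by (intro vec_meas borel_measurable_cond_exp2)
  have mX[measurable]: "Xv \<in> measurable M S" unfolding Xv_def S_def by measurable
  have mY[measurable]: "Yv \<in> measurable M S" unfolding Yv_def S_def by measurable
  have mZ[measurable]: "Z \<in> measurable M (count_space UNIV)" unfolding Z_def by (rule meas_Z) (rule ma)
  have fac: "Yv \<omega> = Yv \<omega>'" if w: "\<omega> \<in> space M" "\<omega>' \<in> space M" "Z \<omega> = Z \<omega>'" for \<omega> \<omega>'
  proof -
    have aeq: "a j \<omega> = a j \<omega>'" if "j < K" for j
      using w(3) that unfolding Z_def map_eq_conv by simp
    have "xhat M tau X a k \<omega> = xhat M tau X a k \<omega>'" if k: "k < K" for k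
    proof -
      define Zk where "Zk = (\<lambda>u. map (\<lambda>j. a j u) [0..<Suc k])"
      have Zkeq: "Zk \<omega> = Zk \<omega>'" unfolding Zk_def map_eq_conv using aeq k by auto
      show ?thesis unfolding xhat_def vec_eq_iff vec_lambda_beta Zk_def[symmetric]
      proof (intro allI)
        fix i
        define F where "F = vimage_algebra (space M) Zk (count_space UNIV)"
        define h where "h = real_cond_exp M F (\<lambda>u. X (real k * tau) u $ i)"
        have hm: "h \<in> borel_measurable F" unfolding h_def by (rule borel_measurable_cond_exp)
        have "h -` {h \<omega>} \<inter> space F \<in> sets F" by (rule measurable_sets[OF hm]) simp
        then obtain A where A: "h -` {h \<omega>} \<inter> space M = Zk -` A \<inter> space M"
          unfolding F_def sets_vimage_algebra2[of Zk "space M" "count_space UNIV", simplified] space_vimage_algebra by auto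
        have "\<omega> \<in> Zk -` A \<inter> space M" using A w(1) by blast
        then have "\<omega>' \<in> Zk -` A \<inter> space M" using Zkeq w(2) by auto
        then have "h \<omega>' = h \<omega>" using A by blast
        then show "real_cond_exp M (vimage_algebra (space M) Zk (count_space UNIV)) (\<lambda>u. X (real k * tau) u $ i) \<omega> =
             real_cond_exp M (vimage_algebra (space M) Zk (count_space UNIV)) (\<lambda>u. X (real k * tau) u $ i) \<omega>'"
          unfolding h_def F_def by simp
      qed
    qed
    then show ?thesis unfolding Yv_def by (intro restrict_ext) auto
  qed
  define C where "C = Yv ` space M"
  have cC: "countable C"
  proof -
    define G where "G z = Yv (SOME u. u \<in> space M \<and> Z u = z)" for z
    have "C \<subseteq> range G"
    proof
      fix y assume "y \<in> C"
      then obtain \<omega> where \<omega>: "\<omega> \<in> space M" "y = Yv \<omega>" unfolding C_def by auto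
      have "\<exists>u. u \<in> space M \<and> Z u = Z \<omega>" using \<omega> by auto
      then have "(SOME u. u \<in> space M \<and> Z u = Z \<omega>) \<in> space M \<and> Z (SOME u. u \<in> space M \<and> Z u = Z \<omega>) = Z \<omega>"
        by (rule someI_ex)
      then have "G (Z \<omega>) = Yv \<omega>" unfolding G_def using fac \<omega>(1) by metis
      then show "y \<in> range G" using \<omega> by (metis rangeI)
    qed
    then show ?thesis by (rule countable_subset) (rule countable_image, simp)
  qed
  have sing: "{y} \<in> sets S" if "y \<in> space S" for y
    unfolding S_def by (rule singleton_PiM) (use that in \<open>auto simp: S_def\<close>)
  have YS: "Yv \<omega> \<in> space S" if "\<omega> \<in> space M" for \<omega> using measurable_space[OF mY that] .
  have fibY: "Yv -` {y} \<inter> space M \<in> sets M" if "y \<in> space S" for y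
    by (rule measurable_sets[OF mY sing[OF that]])
  have Kpos: "0 < real K" using assms(9) by simp
  show ?thesis
  proof (cases "L = \<top>")
    case True
    have "L / ennreal (real K * tau) = \<top>"
      using True by (simp add: ennreal_top_divide)
    then show ?thesis unfolding L_def by simp
  next
    case False
    then obtain Lr where Lr: "L = ennreal Lr" "0 \<le> Lr" by (cases L) auto
    have MIb: "mutual_info_bits M S S Xv Yv \<le> ennreal (real K * theta x')" if x': "0 < x'" "Lr \<le> real K * x'" for x'
    proof -
      define q where "q y = measure M (Yv -` {y} \<inter> space M)" for y
      define p where "p \<omega> = measure M (Z -` {Z \<omega>} \<inter> space M)" for \<omega>
      define Px where "Px = distr M S Xv"
      define Py where "Py = distr M S Yv"
      define P where "P = Px \<Otimes>\<^sub>M Py"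
      define Q where "Q = distr M (S \<Otimes>\<^sub>M S) (\<lambda>\<omega>. (Xv \<omega>, Yv \<omega>))"
      define g where "g = RN_deriv P Q"
      define ed where "ed = entropy_density 2 P Q"
      define C' where "C' = {y\<in>C. 0 < q y}"
      have pPx: "prob_space Px" unfolding Px_def by (rule prob_space_distr) (rule mX)
      have pPy: "prob_space Py" unfolding Py_def by (rule prob_space_distr) (rule mY)
      interpret Px: prob_space Px by (rule pPx)
      interpret Py: prob_space Py by (rule pPy)
      interpret PP: pair_prob_space Px Py
        by (simp add: pair_prob_space_def pair_sigma_finite_def prob_space_imp_sigma_finite pPx pPy)
      have probP: "prob_space P" unfolding P_def by (rule prob_space_pair[OF pPx pPy])
      interpret P: prob_space P by (rule probP)
      have setsPx: "sets Px = sets S" "sets Py = sets S" by (simp_all add: Px_def Py_def)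
      have setsP: "sets P = sets (S \<Otimes>\<^sub>M S)" unfolding P_def by (intro sets_pair_measure_cong setsPx)
      have setsQ: "sets Q = sets (S \<Otimes>\<^sub>M S)" unfolding Q_def by simp
      have spaceP: "space P = space (S \<Otimes>\<^sub>M S)" using setsP by (rule sets_eq_imp_space_eq)
      have mpair[measurable]: "(\<lambda>\<omega>. (Xv \<omega>, Yv \<omega>)) \<in> measurable M (S \<Otimes>\<^sub>M S)" by measurable
      have emPy: "emeasure Py {y} = ennreal (q y)" if "y \<in> space S" for y
        unfolding Py_def q_def using sing[OF that] by (simp add: emeasure_distr emeasure_eq_measure)
      have Ay: "space S \<times> {y} \<in> sets P" if "y \<in> space S" for y
        unfolding setsP using sing[OF that] by (intro pair_measureI) auto
      have K1: "emeasure Q E \<le> ennreal (1 / q y) * emeasure P E"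
        if y: "y \<in> C'" and E: "E \<in> sets P" "E \<subseteq> space S \<times> {y}" for E y
      proof -
        have yS: "y \<in> space S" and qy: "0 < q y" using y YS unfolding C'_def C_def by auto
        define Ey where "Ey = (\<lambda>x. (x, y)) -` E"
        have "Ey \<in> sets Px"
          unfolding Ey_def by (rule sets_Pair2) (use E(1) in \<open>simp add: P_def\<close>)
        then have Ey_sets: "Ey \<in> sets S" by (simp add: setsPx)
        have Eeq: "E = Ey \<times> {y}" using E(2) unfolding Ey_def by auto
        have "emeasure P E = emeasure Px Ey * emeasure Py {y}"
          unfolding Eeq P_def by (rule Py.emeasure_pair_measure_Times) (use Ey_sets sing[OF yS] in \<open>simp_all add: setsPx\<close>)
        also have "\<dots> = emeasure Px Ey * ennreal (q y)" using emPy[OF yS] by simp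
        finally have PE: "emeasure P E = emeasure Px Ey * ennreal (q y)" .
        have "emeasure Q E = emeasure M ((\<lambda>\<omega>. (Xv \<omega>, Yv \<omega>)) -` E \<inter> space M)"
          unfolding Q_def using E(1) setsP by (subst emeasure_distr) auto
        also have "\<dots> \<le> emeasure M (Xv -` Ey \<inter> space M)"
          by (rule emeasure_mono) (use Eeq Ey_sets in \<open>auto intro: measurable_sets[OF mX]\<close>)
        also have "\<dots> = emeasure Px Ey" unfolding Px_def using Ey_sets by (simp add: emeasure_distr)
        also have "\<dots> = ennreal (1 / q y) * (emeasure Px Ey * ennreal (q y))"
        proof -
          have one: "ennreal (1 / q y) * ennreal (q y) = 1" using qy by (subst ennreal_mult[symmetric]) auto
          show ?thesis by (subst mult.left_commute) (simp add: one)
        qed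
        finally show ?thesis using PE by simp
      qed
      have ac: "absolutely_continuous P Q"
        unfolding absolutely_continuous_def
      proof (rule subsetI)
        fix E assume E: "E \<in> null_sets P"
        have Es: "E \<in> sets P" and EP0: "emeasure P E = 0" using E by auto
        have pre_sets: "(\<lambda>\<omega>. (Xv \<omega>, Yv \<omega>)) -` E' \<inter> space M \<in> sets M" if "E' \<in> sets P" for E'
          using that setsP by (intro measurable_sets[OF mpair]) auto
        have sub: "(\<lambda>\<omega>. (Xv \<omega>, Yv \<omega>)) -` E \<inter> space M \<subseteq> (\<Union>y\<in>C. (\<lambda>\<omega>. (Xv \<omega>, Yv \<omega>)) -` (E \<inter> (space S \<times> {y})) \<inter> space M)"
          using measurable_space[OF mX] unfolding C_def by auto
        have "(\<Union>y\<in>C. (\<lambda>\<omega>. (Xv \<omega>, Yv \<omega>)) -` (E \<inter> (space S \<times> {y})) \<inter> space M) \<in> null_sets M"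
        proof (rule null_sets_UN'[OF cC])
          fix y assume yC: "y \<in> C"
          then have yS: "y \<in> space S" using YS unfolding C_def by auto
          have EAy: "E \<inter> (space S \<times> {y}) \<in> sets P" using Es Ay[OF yS] by auto
          show "(\<lambda>\<omega>. (Xv \<omega>, Yv \<omega>)) -` (E \<inter> (space S \<times> {y})) \<inter> space M \<in> null_sets M"
          proof (cases "0 < q y")
            case True
            then have yC': "y \<in> C'" using yC C'_def by auto
            have "emeasure M ((\<lambda>\<omega>. (Xv \<omega>, Yv \<omega>)) -` (E \<inter> (space S \<times> {y})) \<inter> space M) = emeasure Q (E \<inter> (space S \<times> {y}))"
              unfolding Q_def using EAy setsP by (subst emeasure_distr) auto
            also have "\<dots> \<le> ennreal (1 / q y) * emeasure P (E \<inter> (space S \<times> {y}))"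
              by (rule K1[OF yC' EAy]) auto
            also have "emeasure P (E \<inter> (space S \<times> {y})) = 0"
              using EP0 EAy Es by (metis emeasure_mono Int_lower1 le_zero_eq)
            finally show ?thesis using pre_sets[OF EAy] by (auto simp: null_sets_def)
          next
            case False
            then have "q y = 0" unfolding q_def using measure_nonneg[of M "Yv -` {y} \<inter> space M"] by linarith
            then have "Yv -` {y} \<inter> space M \<in> null_sets M"
              using fibY[OF yS] by (auto simp: q_def emeasure_eq_measure null_sets_def)
            then show ?thesis using pre_sets[OF EAy] by (rule null_sets_subset) auto
          qed
        qed
        then have "(\<lambda>\<omega>. (Xv \<omega>, Yv \<omega>)) -` E \<inter> space M \<in> null_sets M"
          using pre_sets[OF Es] sub by (rule null_sets_subset)
        moreover have "E \<in> sets Q" using Es setsP setsQ by simp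
        ultimately show "E \<in> null_sets Q"
          unfolding Q_def using Es setsP by (auto simp: null_sets_def emeasure_distr)
      qed
      have sfP: "sigma_finite_measure P" by (rule prob_space_imp_sigma_finite[OF probP])
      have dens: "density P g = Q" unfolding g_def
        by (rule sigma_finite_measure.density_RN_deriv[OF sfP ac]) (simp add: setsP setsQ)
      have gm[measurable]: "g \<in> borel_measurable P" unfolding g_def by simp
      have gm2[measurable]: "g \<in> borel_measurable (S \<Otimes>\<^sub>M S)" using gm unfolding measurable_cong_sets[OF setsP refl] .
      have gmQ[measurable]: "g \<in> borel_measurable Q" using gm2 unfolding measurable_cong_sets[OF setsQ refl] .
      have K3: "AE z in P. snd z \<in> C' \<longrightarrow> g z \<le> ennreal (1 / q (snd z))"
      proof (rule AE_I')
        define N where "N y = {z \<in> space P. snd z = y \<and> ennreal (1 / q y) < g z}" for y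
        show "{z\<in>space P. \<not> (snd z \<in> C' \<longrightarrow> g z \<le> ennreal (1 / q (snd z)))} \<subseteq> (\<Union>y\<in>C'. N y)"
          by (auto simp: N_def not_le)
        show "(\<Union>y\<in>C'. N y) \<in> null_sets P"
        proof (rule null_sets_UN')
          show "countable C'" using cC unfolding C'_def by (rule countable_subset[rotated]) auto
          fix y assume y: "y \<in> C'"
          then have yS: "y \<in> space S" and qy: "0 < q y" using YS unfolding C'_def C_def by auto
          have Neq: "N y = (space S \<times> {y}) \<inter> {z \<in> space P. ennreal (1 / q y) < g z}"
            using yS by (auto simp: N_def spaceP space_pair_measure)
          have Ns[measurable]: "N y \<in> sets P" unfolding Neq using Ay[OF yS] by (intro sets.Int) auto
          have NS: "N y \<subseteq> space S \<times> {y}" unfolding Neq by auto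
          have QN: "emeasure Q (N y) \<le> ennreal (1 / q y) * emeasure P (N y)" by (rule K1[OF y Ns NS])
          have QN2: "emeasure Q (N y) = (\<integral>\<^sup>+z. g z * indicator (N y) z \<partial>P)"
            unfolding dens[symmetric] by (rule emeasure_density) (simp_all add: Ns)
          have RHS: "ennreal (1 / q y) * emeasure P (N y) = (\<integral>\<^sup>+z. ennreal (1 / q y) * indicator (N y) z \<partial>P)"
            using Ns by (simp add: nn_integral_cmult_indicator)
          show "N y \<in> null_sets P"
          proof (rule ccontr)
            assume nn: "N y \<notin> null_sets P"
            have "(\<integral>\<^sup>+z. ennreal (1 / q y) * indicator (N y) z \<partial>P) < (\<integral>\<^sup>+z. g z * indicator (N y) z \<partial>P)"
            proof (rule nn_integral_less)
              show "(\<integral>\<^sup>+z. ennreal (1 / q y) * indicator (N y) z \<partial>P) \<noteq> \<infinity>"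
                using Ns by (simp add: nn_integral_cmult_indicator P.emeasure_eq_measure ennreal_mult_eq_top_iff)
              show "AE z in P. ennreal (1/q y) * indicator (N y) z \<le> g z * indicator (N y) z"
                by (intro AE_I2) (auto simp: N_def split: split_indicator intro: less_imp_le)
              show "\<not> (AE z in P. g z * indicator (N y) z \<le> ennreal (1/q y) * indicator (N y) z)"
              proof
                assume "AE z in P. g z * indicator (N y) z \<le> ennreal (1/q y) * indicator (N y) z"
                then have "AE z in P. z \<notin> N y"
                  by eventually_elim (auto simp: N_def split: split_indicator)
                then have "emeasure P (N y) = 0"
                  by (subst (asm) AE_iff_measurable[OF Ns]) (auto simp: N_def)
                then show False using nn Ns by (simp add: null_sets_def)
              qed
            next
              show "(\<lambda>z. ennreal (1 / q y) * indicator (N y) z) \<in> borel_measurable P"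
                by (intro borel_measurable_times_ennreal borel_measurable_const borel_measurable_indicator Ns)
            next
              show "(\<lambda>z. g z * indicator (N y) z) \<in> borel_measurable P"
                by (intro borel_measurable_times_ennreal gm borel_measurable_indicator Ns)
            qed
            then show False using QN QN2 RHS by simp
          qed
        qed
      qed
      have AEM1: "AE \<omega> in M. Yv \<omega> \<in> C'"
      proof -
        have "AE \<omega> in M. 0 < measure M (Yv -` {Yv \<omega>} \<inter> space M)"
          by (rule AE_fiber_pos[OF assms(1) cC]) (use YS fibY in \<open>auto simp: C_def\<close>)
        then show ?thesis using AE_space by eventually_elim (auto simp: C'_def C_def q_def)
      qed
      have AEQ: "AE z in Q. snd z \<in> C' \<longrightarrow> g z \<le> ennreal (1 / q (snd z))"
        by (rule absolutely_continuous_AE[OF _ ac K3]) (simp add: setsP setsQ)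
      have AEM2: "AE \<omega> in M. Yv \<omega> \<in> C' \<longrightarrow> g (Xv \<omega>, Yv \<omega>) \<le> ennreal (1 / q (Yv \<omega>))"
        using AE_distrD[OF mpair AEQ[unfolded Q_def]] by simp
      have gpos: "AE z in Q. 0 < g z"
      proof (rule AE_I')
        show "{z\<in>space Q. \<not> 0 < g z} \<subseteq> {z\<in>space Q. \<not> 0 < g z}" ..
        have s1: "{z\<in>space Q. \<not> 0 < g z} \<in> sets Q" by measurable
        have s2: "{z\<in>space Q. \<not> 0 < g z} \<in> sets P" using s1 setsP setsQ by simp
        have "emeasure Q {z\<in>space Q. \<not> 0 < g z} = (\<integral>\<^sup>+z. g z * indicator {z\<in>space Q. \<not> 0 < g z} z \<partial>P)"
          unfolding dens[symmetric] by (rule emeasure_density) (simp_all add: s2)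
        also have "\<dots> = (\<integral>\<^sup>+z. 0 \<partial>P)"
          by (intro nn_integral_cong) (auto split: split_indicator)
        finally show "{z\<in>space Q. \<not> 0 < g z} \<in> null_sets Q" using s1 by (simp add: null_sets_def)
      qed
      have AEM3: "AE \<omega> in M. 0 < g (Xv \<omega>, Yv \<omega>)"
        using AE_distrD[OF mpair gpos[unfolded Q_def]] by simp
      have AEp: "AE \<omega> in M. 0 < p \<omega>"
        unfolding p_def by (rule AE_fiber_pos[OF assms(1), of UNIV]) (simp_all add: measurable_sets[OF mZ])
      have p_le_q: "p \<omega> \<le> q (Yv \<omega>)" if "\<omega> \<in> space M" for \<omega>
        unfolding p_def q_def
      proof (rule finite_measure_mono)
        show "Z -` {Z \<omega>} \<inter> space M \<subseteq> Yv -` {Yv \<omega>} \<inter> space M" using fac that by blast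
        show "Yv -` {Yv \<omega>} \<inter> space M \<in> sets M" by (rule fibY[OF YS[OF that]])
      qed
      have edeq: "ed z = log 2 (enn2real (g z))" for z unfolding ed_def g_def entropy_density_def by simp
      have AEed: "AE \<omega> in M. ed (Xv \<omega>, Yv \<omega>) \<le> - log 2 (p \<omega>) \<and> 0 \<le> - log 2 (p \<omega>)"
        using AEM1 AEM2 AEM3 AEp AE_space
      proof eventually_elim
        case (elim \<omega>)
        let ?G = "g (Xv \<omega>, Yv \<omega>)"
        have qpos: "0 < q (Yv \<omega>)" using elim(1) by (simp add: C'_def)
        have Gle: "?G \<le> ennreal (1 / q (Yv \<omega>))" using elim(1,2) by simp
        then have Gfin: "?G < \<top>" using le_less_trans by fastforce
        have Gr: "0 < enn2real ?G" using Gfin elim(3) by (simp add: enn2real_positive_iff)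
        have "enn2real ?G \<le> enn2real (ennreal (1 / q (Yv \<omega>)))" by (rule enn2real_mono[OF Gle]) simp
        then have "enn2real ?G \<le> 1 / q (Yv \<omega>)" using qpos by simp
        moreover have "0 < 1 / q (Yv \<omega>)" using qpos by simp
        ultimately have "log 2 (enn2real ?G) \<le> log 2 (1 / q (Yv \<omega>))" using Gr by (simp add: log_le_cancel_iff)
        also have "\<dots> = - log 2 (q (Yv \<omega>))" using qpos by (simp add: log_divide)
        also have "\<dots> \<le> - log 2 (p \<omega>)" using p_le_q[OF elim(5)] elim(4) qpos by (simp add: log_le_cancel_iff)
        finally have "ed (Xv \<omega>, Yv \<omega>) \<le> - log 2 (p \<omega>)" by (simp add: edeq)
        moreover have "p \<omega> \<le> 1" by (simp add: p_def)
        then have "0 \<le> - log 2 (p \<omega>)" using elim(4) by simp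
        ultimately show ?case by simp
      qed
      have mpl[measurable]: "(\<lambda>\<omega>. p \<omega>) \<in> borel_measurable M" unfolding p_def by (rule measurable_compose[OF mZ]) simp
      have edm[measurable]: "ed \<in> borel_measurable (S \<Otimes>\<^sub>M S)"
        using measurable_entropy_density[of 2 P Q] unfolding ed_def measurable_cong_sets[OF setsP refl] .
      have edmP[measurable]: "ed \<in> borel_measurable P" unfolding ed_def by simp
      define rr where "rr = rK x' K"
      have rr_eq: "pmf rr (Z \<omega>) = (\<Prod>j<K. pmf (r0 x') (a j \<omega>))" for \<omega>
        unfolding rr_def Z_def by (subst pmf_rK) (simp_all add: prod_list_map_upt)
      have rpos: "0 < pmf rr (Z \<omega>)" for \<omega> by (simp add: rr_eq prod_pos pmf_r0_pos x'(1))
      have gib: "(\<integral>\<^sup>+\<omega>. ennreal (- log 2 (p \<omega>)) \<partial>M) \<le> (\<integral>\<^sup>+\<omega>. ennreal (- log 2 (pmf rr (Z \<omega>))) \<partial>M)"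
        unfolding p_def by (rule gibbs[OF assms(1) mZ]) (simp add: rpos)
      define c0 where "c0 = log 2 (1 + x')"
      define c1 where "c1 = 1 + log 2 ((1 + x') / x')"
      have c0: "0 \<le> c0" unfolding c0_def using x' by simp
      have c1: "0 \<le> c1" unfolding c1_def using x' by simp
      have lrr: "- log 2 (pmf rr (Z \<omega>)) = (\<Sum>j<K. c0 + c1 * real (length (a j \<omega>)))" for \<omega>
      proof -
        have "- log 2 (pmf rr (Z \<omega>)) = (\<Sum>j<K. - log 2 (pmf (r0 x') (a j \<omega>)))"
        proof -
          have nz: "\<And>s. pmf (r0 x') s \<noteq> 0" using pmf_r0_pos[OF x'(1)] by (metis less_irrefl)
          show ?thesis unfolding rr_eq log_def
            by (subst ln_prod) (auto simp: nz sum_negf sum_divide_distrib)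
        qed
        also have "\<dots> = (\<Sum>j<K. c0 + c1 * real (length (a j \<omega>)))"
          by (simp add: log_pmf_r0[OF x'(1)] c0_def c1_def mult.commute)
        finally show ?thesis .
      qed
      have mlen[measurable]: "(\<lambda>\<omega>. ennreal (real (length (a j \<omega>)))) \<in> borel_measurable M" for j
        by (rule measurable_compose[OF ma]) simp
      have bnd: "(\<integral>\<^sup>+\<omega>. ennreal (- log 2 (pmf rr (Z \<omega>))) \<partial>M) = ennreal (real K * c0 + c1 * Lr)"
      proof -
        have "(\<integral>\<^sup>+\<omega>. ennreal (- log 2 (pmf rr (Z \<omega>))) \<partial>M)
            = (\<integral>\<^sup>+\<omega>. (\<Sum>j<K. ennreal c0 + ennreal c1 * ennreal (real (length (a j \<omega>)))) \<partial>M)"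
        proof (intro nn_integral_cong)
          fix \<omega>
          have "ennreal (- log 2 (pmf rr (Z \<omega>))) = (\<Sum>j<K. ennreal (c0 + c1 * real (length (a j \<omega>))))"
            unfolding lrr using c0 c1 by (subst sum_ennreal) auto
          also have "\<dots> = (\<Sum>j<K. ennreal c0 + ennreal c1 * ennreal (real (length (a j \<omega>))))"
            using c0 c1 by (intro sum.cong refl) (simp add: ennreal_plus ennreal_mult)
          finally show "ennreal (- log 2 (pmf rr (Z \<omega>))) = (\<Sum>j<K. ennreal c0 + ennreal c1 * ennreal (real (length (a j \<omega>))))" .
        qed
        also have "\<dots> = (\<Sum>j<K. ennreal c0 + ennreal c1 * (\<integral>\<^sup>+\<omega>. ennreal (real (length (a j \<omega>))) \<partial>M))"
          by (simp add: nn_integral_sum nn_integral_add nn_integral_cmult emeasure_space_1)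
        also have "\<dots> = of_nat K * ennreal c0 + ennreal c1 * L"
          by (simp add: sum.distrib sum_distrib_left L_def)
        also have "\<dots> = ennreal (real K * c0 + c1 * Lr)"
          using Lr c0 c1 by (simp add: ennreal_plus ennreal_mult ennreal_of_nat_eq_real_of_nat)
        finally show ?thesis .
      qed
      have thK: "real K * c0 + c1 * Lr \<le> real K * theta x'"
      proof -
        have "theta x' = c0 + x' * c1" unfolding theta_def c0_def c1_def using x' by (simp add: log_divide algebra_simps)
        then have "real K * theta x' = real K * c0 + c1 * (real K * x')" by (simp add: algebra_simps)
        moreover have "c1 * Lr \<le> c1 * (real K * x')" using x'(2) c1 by (rule mult_left_mono)
        ultimately show ?thesis by linarith
      qed
      have finP: "(\<integral>\<^sup>+\<omega>. ennreal (- log 2 (p \<omega>)) \<partial>M) \<le> ennreal (real K * theta x')"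
        using gib bnd ennreal_leI[OF thK] by simp
      have AEnn: "AE \<omega> in M. 0 \<le> - log 2 (p \<omega>)" using AEed by eventually_elim simp
      have intp: "integrable M (\<lambda>\<omega>. - log 2 (p \<omega>))"
        by (rule integrableI_nonneg) (use AEnn finP in \<open>auto simp: less_top[symmetric] top_unique\<close>)
      have negpart: "(\<integral>\<^sup>+\<omega>. ennreal (max 0 (- ed (Xv \<omega>, Yv \<omega>))) \<partial>M) \<le> ennreal (1 / ln 2)"
      proof -
        have "(\<integral>\<^sup>+\<omega>. ennreal (max 0 (- ed (Xv \<omega>, Yv \<omega>))) \<partial>M) = (\<integral>\<^sup>+z. ennreal (max 0 (- ed z)) \<partial>Q)"
          unfolding Q_def by (rule nn_integral_distr[symmetric]) simp_all
        also have "\<dots> = (\<integral>\<^sup>+z. g z * ennreal (max 0 (- ed z)) \<partial>P)"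
          unfolding dens[symmetric] by (rule nn_integral_density) simp_all
        also have "\<dots> \<le> (\<integral>\<^sup>+z. ennreal (1 / ln 2) \<partial>P)"
          by (rule nn_integral_mono) (unfold edeq, rule entbound)
        also have "\<dots> = ennreal (1 / ln 2)" by (simp add: P.emeasure_space_1)
        finally show ?thesis .
      qed
      have int_ed: "integrable M (\<lambda>\<omega>. ed (Xv \<omega>, Yv \<omega>))"
      proof (rule integrableI_bounded)
        show "(\<lambda>\<omega>. ed (Xv \<omega>, Yv \<omega>)) \<in> borel_measurable M" by simp
        have "(\<integral>\<^sup>+\<omega>. ennreal (norm (ed (Xv \<omega>, Yv \<omega>))) \<partial>M)
            \<le> (\<integral>\<^sup>+\<omega>. ennreal (- log 2 (p \<omega>)) + ennreal (max 0 (- ed (Xv \<omega>, Yv \<omega>))) \<partial>M)"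
        proof (rule nn_integral_mono_AE)
          show "AE \<omega> in M. ennreal (norm (ed (Xv \<omega>, Yv \<omega>))) \<le> ennreal (- log 2 (p \<omega>)) + ennreal (max 0 (- ed (Xv \<omega>, Yv \<omega>)))"
            using AEed
          proof eventually_elim
            case (elim \<omega>)
            have "norm (ed (Xv \<omega>, Yv \<omega>)) \<le> - log 2 (p \<omega>) + max 0 (- ed (Xv \<omega>, Yv \<omega>))"
              using elim by auto
            then have "ennreal (norm (ed (Xv \<omega>, Yv \<omega>))) \<le> ennreal (- log 2 (p \<omega>) + max 0 (- ed (Xv \<omega>, Yv \<omega>)))"
              by (rule ennreal_leI)
            also have "\<dots> = ennreal (- log 2 (p \<omega>)) + ennreal (max 0 (- ed (Xv \<omega>, Yv \<omega>)))"
              using elim by (intro ennreal_plus) auto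
            finally show ?case .
          qed
        qed
        also have "\<dots> = (\<integral>\<^sup>+\<omega>. ennreal (- log 2 (p \<omega>)) \<partial>M) + (\<integral>\<^sup>+\<omega>. ennreal (max 0 (- ed (Xv \<omega>, Yv \<omega>))) \<partial>M)"
          by (rule nn_integral_add) simp_all
        also have "\<dots> < \<infinity>"
        proof -
          have "(\<integral>\<^sup>+\<omega>. ennreal (- log 2 (p \<omega>)) \<partial>M) < \<infinity>"
            using le_less_trans[OF finP ennreal_less_top] by simp
          moreover have "(\<integral>\<^sup>+\<omega>. ennreal (max 0 (- ed (Xv \<omega>, Yv \<omega>))) \<partial>M) < \<infinity>"
            using le_less_trans[OF negpart ennreal_less_top] by simp
          ultimately show ?thesis by simp
        qed
        finally show "(\<integral>\<^sup>+\<omega>. ennreal (norm (ed (Xv \<omega>, Yv \<omega>))) \<partial>M) < \<infinity>" .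
      qed
      have int_edQ: "integrable Q ed" unfolding Q_def by (subst integrable_distr_eq[OF mpair edm]) (rule int_ed)
      have MIeq: "prob_space.mutual_information M 2 S S Xv Yv = (\<integral>\<omega>. ed (Xv \<omega>, Yv \<omega>) \<partial>M)"
      proof -
        have "prob_space.mutual_information M 2 S S Xv Yv = KL_divergence 2 P Q"
          unfolding prob_space.mutual_information_def[OF assms(1)] P_def Px_def Py_def Q_def ..
        also have "\<dots> = integral\<^sup>L Q ed" unfolding KL_divergence_def ed_def ..
        also have "\<dots> = (\<integral>\<omega>. ed (Xv \<omega>, Yv \<omega>) \<partial>M)" unfolding Q_def by (rule integral_distr[OF mpair edm])
        finally show ?thesis .
      qed
      have "mutual_info_bits M S S Xv Yv = ennreal (prob_space.mutual_information M 2 S S Xv Yv)"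
        using ac int_edQ unfolding mutual_info_bits_def Let_def Px_def[symmetric] Py_def[symmetric] P_def[symmetric] Q_def[symmetric] ed_def
        by simp
      also have "\<dots> \<le> ennreal (\<integral>\<omega>. - log 2 (p \<omega>) \<partial>M)"
        unfolding MIeq by (intro ennreal_leI integral_mono_AE[OF int_ed intp]) (use AEed in auto)
      also have "\<dots> = (\<integral>\<^sup>+\<omega>. ennreal (- log 2 (p \<omega>)) \<partial>M)"
        by (rule nn_integral_eq_integral[OF intp AEnn, symmetric])
      also have "\<dots> \<le> ennreal (real K * theta x')" by (rule finP)
      finally show ?thesis .
    qed
    have "Lr \<le> real K * (Lr / K + 1)" using Kpos Lr by (simp add: field_simps)
    moreover have "0 < Lr / K + 1" using Lr Kpos by (simp add: add_nonneg_pos)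
    ultimately have "mutual_info_bits M S S Xv Yv \<le> ennreal (real K * theta (Lr / K + 1))"
      by (intro MIb)
    then have "mutual_info_bits M S S Xv Yv \<noteq> \<top>" by (auto simp: top_unique)
    then obtain Ir where Ir: "mutual_info_bits M S S Xv Yv = ennreal Ir" "0 \<le> Ir"
      by (cases "mutual_info_bits M S S Xv Yv") auto
    have div: "mutual_info_bits M S S Xv Yv / of_nat K = ennreal (Ir / K)"
      using Ir Kpos by (simp add: divide_ennreal ennreal_of_nat_eq_real_of_nat)
    have tie: "theta_inv_ext (ennreal (Ir / K)) = ennreal (theta_inv (Ir / K))"
      unfolding theta_inv_ext_def using Ir Kpos by simp
    have tle: "theta_inv (Ir / K) \<le> Lr / K"
    proof (rule field_le_epsilon)
      fix e :: real assume e: "0 < e"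
      have "Lr \<le> real K * (Lr / K + e)" using Kpos Lr e by (simp add: field_simps)
      moreover have epos: "0 < Lr / K + e" using Lr Kpos e by (simp add: add_nonneg_pos)
      ultimately have "ennreal Ir \<le> ennreal (real K * theta (Lr / K + e))"
        using MIb[of "Lr / K + e"] Ir by simp
      moreover have "0 \<le> theta (Lr / K + e)" using theta_ge[of "Lr / K + e"] epos by simp
      ultimately have "Ir \<le> K * theta (Lr/K + e)" using Kpos by (simp add: ennreal_le_iff)
      then have "Ir / K \<le> theta (Lr / K + e)" using Kpos by (simp add: field_simps)
      then show "theta_inv (Ir / K) \<le> Lr / K + e"
        by (intro theta_inv_le) (use Ir Kpos Lr e in auto)
    qed
    have "theta_inv_ext (mutual_info_bits M S S Xv Yv / of_nat K) / ennreal tau \<le> ennreal (Lr / K) / ennreal tau"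
      unfolding div tie by (intro divide_right_mono_ennreal ennreal_leI tle)
    also have "\<dots> = L / ennreal (real K * tau)"
      using Lr Kpos assms(7) by (simp add: divide_ennreal)
    finally show ?thesis unfolding S_def Xv_def Yv_def L_def .
  qed
qed

end
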